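(* Let $(X,\mathcal{A})$ be a cross resolvable design with $|X|=v$ points, blocks of size $k$, and $r$ parallel classes. Let $i\in\{3,4,\dots,r\}$ be such that the $i$-th cross intersection number $\mu_i$ exists. Then for any $i-1$ blocks drawn from $i-1$ distinct parallel classes, the cardinality of their intersection equals $\mu_i\frac{v}{k}$; that is, $\mu_{i-1}=\mu_i\frac{v}{k}$.
   Context: A design is a pair $(X,\mathcal{A})$ where $X$ is a finite set of points and $\mathcal{A}$ is a collection of nonempty subsets of $X$ (blocks), all of the same size $k$. A parallel class is a subset of $\mathcal{A}$ consisting of pairwise disjoint blocks whose union is $X$. The design is resolvable if $\mathcal{A}$ can be partitioned into parallel classes; fix such a partition into $r$ parallel classes (each then contains exactly $v/k$ blocks). For $i\in\{2,\dots,r\}$, the $i$-th cross intersection number $\mu_i$ is said to exist if the cardinality $|B_1\cap\cdots\cap B_i|$ takes the same nonzero value for every choice of blocks $B_1,\dots,B_i$ taken from $i$ distinct parallel classes; $\mu_i$ is this common value. A resolvable design is a cross resolvable design (CRD) if $\mu_i$ exists for at least one $i\in\{2,\dots,r\}$. *)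

theory Defs
  imports Complex_Main
begin

definition parallel_class :: "'a set \<Rightarrow> nat \<Rightarrow> 'a set set \<Rightarrow> bool" where
  "parallel_class X k C \<longleftrightarrow>
     (\<forall>B\<in>C. B \<subseteq> X \<and> B \<noteq> {} \<and> card B = k) \<and>
     (\<forall>B1\<in>C. \<forall>B2\<in>C. B1 \<noteq> B2 \<longrightarrow> B1 \<inter> B2 = {}) \<and>
     \<Union>C = X"

text \<open>A resolvable design with point set X, block size k, and a fixed resolution
  into r parallel classes P 0, ..., P (r-1); the block collection is the
  (multiset) union of these classes.\<close>
definition resolvable_design :: "'a set \<Rightarrow> nat \<Rightarrow> nat \<Rightarrow> (nat \<Rightarrow> 'a set set) \<Rightarrow> bool" where
  "resolvable_design X k r P \<longleftrightarrow> finite X \<and> (\<forall>j<r. parallel_class X k (P j))"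

definition cross_intersection_number ::
  "(nat \<Rightarrow> 'a set set) \<Rightarrow> nat \<Rightarrow> nat \<Rightarrow> nat \<Rightarrow> bool" where
  "cross_intersection_number P r i mu \<longleftrightarrow> mu \<noteq> 0 \<and>
     (\<forall>J B. inj_on J {..<i} \<and> J ` {..<i} \<subseteq> {..<r} \<and> (\<forall>t<i. B t \<in> P (J t))
        \<longrightarrow> card (\<Inter>t<i. B t) = mu)"

definition cross_resolvable_design :: "'a set \<Rightarrow> nat \<Rightarrow> nat \<Rightarrow> (nat \<Rightarrow> 'a set set) \<Rightarrow> bool" where
  "cross_resolvable_design X k r P \<longleftrightarrow> resolvable_design X k r P \<and>
     (\<exists>i\<in>{2..r}. \<exists>mu. cross_intersection_number P r i mu)"

end

theory Submission
  imports Defs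
begin

theorem lemma1:
  fixes X :: "'a set" and P :: "nat \<Rightarrow> 'a set set" and v k r i mu :: nat
  assumes "cross_resolvable_design X k r P"
    and "card X = v"
    and "i \<in> {3..r}"
    and "cross_intersection_number P r i mu"
  shows "\<forall>J B. inj_on J {..<i-1} \<and> J ` {..<i-1} \<subseteq> {..<r} \<and> (\<forall>t<i-1. B t \<in> P (J t))
           \<longrightarrow> real (card (\<Inter>t<i-1. B t)) = real mu * real v / real k"
proof (intro allI impI)
  fix J B
  assume h: "inj_on J {..<i-1} \<and> J ` {..<i-1} \<subseteq> {..<r} \<and> (\<forall>t<i-1. B t \<in> P (J t))"
  have fin: "finite X" and pc: "\<And>j. j < r \<Longrightarrow> parallel_class X k (P j)"
    using assms(1) unfolding cross_resolvable_design_def resolvable_design_def by auto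
  have i3: "3 \<le> i" "i \<le> r" using assms(3) by auto
  have "card (J ` {..<i-1}) = i - 1" using h card_image by (metis card_lessThan)
  hence "J ` {..<i-1} \<noteq> {..<r}"
  proof (intro notI)
    assume "card (J ` {..<i-1}) = i - 1" "J ` {..<i-1} = {..<r}"
    hence "i - 1 = r" by simp
    with i3 show False by simp
  qed
  with h obtain j where j: "j < r" "j \<notin> J ` {..<i-1}" by auto
  have pj: "parallel_class X k (P j)" using pc j by auto
  define I where "I = (\<Inter>t<i-1. B t)"
  have B0: "B 0 \<in> P (J 0)" "J 0 < r" using h i3 by (auto simp: image_subset_iff)
  have "B 0 \<subseteq> X" "card (B 0) = k" "B 0 \<noteq> {}"
    using pc[OF B0(2)] B0(1) unfolding parallel_class_def by auto
  hence kpos: "k > 0" using fin finite_subset by (metis card_gt_0_iff)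
  have IX: "I \<subseteq> X" unfolding I_def using \<open>B 0 \<subseteq> X\<close> i3 by auto
  have finP: "finite (P j)"
  proof -
    have "P j \<subseteq> Pow X" using pj unfolding parallel_class_def by auto
    thus ?thesis using fin by (simp add: finite_subset)
  qed
  have disj: "\<forall>C\<in>P j. \<forall>D\<in>P j. C \<noteq> D \<longrightarrow> C \<inter> D = {}" and UX: "\<Union>(P j) = X"
    and blk: "\<forall>C\<in>P j. C \<subseteq> X \<and> C \<noteq> {} \<and> card C = k"
    using pj unfolding parallel_class_def by auto
  have each: "card (I \<inter> C) = mu" if C: "C \<in> P j" for C
  proof -
    define J' where "J' = (\<lambda>t. if t < i - 1 then J t else j)"
    define B' where "B' = (\<lambda>t. if t < i - 1 then B t else C)"
    have "inj_on J' {..<i}"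
    proof (rule inj_onI)
      fix a b assume a: "a \<in> {..<i}" and b: "b \<in> {..<i}" and e: "J' a = J' b"
      show "a = b"
      proof (cases "a < i - 1")
        case True
        show ?thesis
        proof (cases "b < i - 1")
          case True
          with \<open>a < i - 1\<close> e h show ?thesis unfolding J'_def by (auto simp: inj_on_def)
        next
          case False
          with \<open>a < i - 1\<close> e j show ?thesis unfolding J'_def by auto
        qed
      next
        case False
        show ?thesis
        proof (cases "b < i - 1")
          case True
          with \<open>\<not> a < i - 1\<close> e j show ?thesis unfolding J'_def by auto
        next
          case False
          with \<open>\<not> a < i - 1\<close> a b show ?thesis by auto
        qed
      qed
    qed
    moreover have "J' ` {..<i} \<subseteq> {..<r}" unfolding J'_def using h j by auto
    moreover have "\<forall>t<i. B' t \<in> P (J' t)" unfolding J'_def B'_def using h C by auto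
    ultimately have "card (\<Inter>t<i. B' t) = mu"
      using assms(4) unfolding cross_intersection_number_def by blast
    moreover have "(\<Inter>t<i. B' t) = I \<inter> C"
    proof -
      have "{..<i} = insert (i-1) {..<i-1}" using i3 by auto
      thus ?thesis unfolding B'_def I_def by auto
    qed
    ultimately show ?thesis by simp
  qed
  have "card I = card (\<Union>C\<in>P j. I \<inter> C)"
    proof -
    have "(\<Union>C\<in>P j. I \<inter> C) = I \<inter> \<Union>(P j)" by blast
    thus ?thesis using IX UX by (simp add: Int_absorb2)
  qed
  also have "\<dots> = (\<Sum>C\<in>P j. card (I \<inter> C))"
    by (rule card_UN_disjoint) (use finP disj finite_subset[OF IX fin] in auto)
  also have "\<dots> = card (P j) * mu" using each by simp
  finally have cI: "card I = card (P j) * mu" .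
  have "v = card (\<Union>C\<in>P j. C)" using UX assms(2) by simp
  also have "\<dots> = (\<Sum>C\<in>P j. card C)"
    by (rule card_UN_disjoint) (use finP disj blk in \<open>auto intro: finite_subset[OF _ fin]\<close>)
  also have "\<dots> = card (P j) * k" using blk by simp
  finally have "v = card (P j) * k" .
  with cI kpos show "real (card (\<Inter>t<i-1. B t)) = real mu * real v / real k"
    unfolding I_def by simp
qed

end
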